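(* Let $m\ge1$, let $S\le G_{m,m}$ be the stabilizer of $(0,0,\dots,0)\in H_{2m+1}$ under the right action $\pi$ described below, and let $\widehat K_m\to K_{m,m}$ be the finite covering space of the presentation complex $K_{m,m}$ corresponding to $S$. Then $\widehat K_m$ cellularly embeds into the $2$–skeleton of $\mathcal T_{2m+1}$.
   Context: $G_{m,m}=\langle a_1,\dots,a_{2m+1}\mid [a_i,a_{i+1}]=1\ (1\le i\le m),\ a_{m+j+1}^{-1}a_ja_{m+j+1}=a_{m+j}\ (1\le j\le m)\rangle$; $K_{m,m}$ is its presentation $2$–complex (one $0$–cell, $2m+1$ loops, $2m$ squares); $G_{m,k}$ denotes the subgroup generated by $a_1,\dots,a_{m+k+1}$. Let $H_n=\{0,1\}^n$, identified with a subset of $H_{n+1}$ by appending $0$; $H_n^*\subset H_{n+1}$ the tuples with last coordinate $1$. Let $\beta_i$ flip the $i$-th coordinate and $\varphi_{k,m+k}$ swap the $k$-th and $(m+k)$-th coordinates. The right action $\pi$ ($\pi(gh)=\pi(h)\pi(g)$) of $G_{m,m}$ on $H_{2m+1}$ is defined inductively: $\pi(a_i)=\beta_i$ on $H_{m+1}$ for $i\le m+1$; for $k=1,\dots,m$, $\pi(a_{m+k+1})=\beta_{m+k+1}$ on $H_{m+k+1}$ and, for $j\le m+k$, $\pi(a_j)|_{H^*_{m+k}}=\beta_{m+k+1}\circ\varphi_{k,m+k}\circ\pi(a_j)|_{H_{m+k}}\circ\varphi_{k,m+k}\circ\beta_{m+k+1}$; this is a well-defined transitive right action. $C_2=\mathbb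 R/2\mathbb Z$ has $0$–cells $0,1$ and $1$–cells $[0,1]$, $[1,2]$; $\mathcal T_n=(\mathbb R/2\mathbb Z)^n$ has the product CW (cube) structure, with $0$–skeleton $H_n$. *)

theory Defs
  imports Main
begin

text \<open>A tuple in H_n = {0,1}^n is a function nat => bool which is False outside
  the coordinates 1..n (True = 1). Appending 0 is then literally the inclusion
  H_n in H_(n+1).\<close>

definition Hcube :: "nat \<Rightarrow> (nat \<Rightarrow> bool) set" where
  "Hcube n = {x. \<forall>k. x k \<longrightarrow> 1 \<le> k \<and> k \<le> n}"

definition zero_tuple :: "nat \<Rightarrow> bool" where
  "zero_tuple = (\<lambda>_. False)"

definition flip :: "nat \<Rightarrow> (nat \<Rightarrow> bool) \<Rightarrow> (nat \<Rightarrow> bool)" where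
  "flip i x = x(i := \<not> x i)"

definition swapc :: "nat \<Rightarrow> nat \<Rightarrow> (nat \<Rightarrow> bool) \<Rightarrow> (nat \<Rightarrow> bool)" where
  "swapc i j x = x(i := x j, j := x i)"

text \<open>pi_stage m k j is the permutation pi(a_j) of H_{m+k+1} (for j <= m+k+1),
  defined by the paper's induction on k; stage 0 is pi(a_i) = beta_i on H_{m+1}.\<close>

fun pi_stage :: "nat \<Rightarrow> nat \<Rightarrow> nat \<Rightarrow> (nat \<Rightarrow> bool) \<Rightarrow> (nat \<Rightarrow> bool)" where
  "pi_stage m 0 j x = flip j x"
| "pi_stage m (Suc k) j x =
     (let n = m + Suc k + 1 in
      if j = n then flip n x
      else if \<not> x n then pi_stage m k j x
      else flip n (swapc (Suc k) (m + Suc k)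
                 (pi_stage m k j (swapc (Suc k) (m + Suc k) (flip n x)))))"

text \<open>pi(a_j) on H_{2m+1}, 1 <= j <= 2m+1; right action: x . a_j = pi_act m j x.\<close>
definition pi_act :: "nat \<Rightarrow> nat \<Rightarrow> (nat \<Rightarrow> bool) \<Rightarrow> (nat \<Rightarrow> bool)" where
  "pi_act m j x = pi_stage m m j x"

definition pi_act_inv :: "nat \<Rightarrow> nat \<Rightarrow> (nat \<Rightarrow> bool) \<Rightarrow> (nat \<Rightarrow> bool)" where
  "pi_act_inv m j y = (THE x. x \<in> Hcube (2*m+1) \<and> pi_act m j x = y)"

text \<open>A 2-complex: 0-cells, oriented 1-cells with source and target, and 2-cells
  whose attaching map is a closed edge path, given as a list of (edge, forward?).\<close>

record ('v, 'e, 'f) cx2 =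
  verts :: "'v set"
  edges :: "'e set"
  faces :: "'f set"
  esrc :: "'e \<Rightarrow> 'v"
  etgt :: "'e \<Rightarrow> 'v"
  fbdry :: "'f \<Rightarrow> ('e \<times> bool) list"

definition rev_path :: "('e \<times> bool) list \<Rightarrow> ('e \<times> bool) list" where
  "rev_path p = rev (map (\<lambda>(e, d). (e, \<not> d)) p)"

text \<open>A cellular embedding: injective maps on 0-, 1- and 2-cells into the cells of
  the target, each 1-cell mapped onto a 1-cell compatibly with its endpoints
  (sigma e records whether the orientation is preserved), each 2-cell mapped onto
  a 2-cell whose attaching path is the image path up to cyclic rotation and
  reversal.\<close>

definition cellular_embedding ::
  "('v, 'e, 'f) cx2 \<Rightarrow> ('w, 'd, 'g) cx2 \<Rightarrow> ('v \<Rightarrow> 'w) \<Rightarrow> ('e \<Rightarrow> 'd) \<Rightarrow> ('f \<Rightarrow> 'g)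
     \<Rightarrow> ('e \<Rightarrow> bool) \<Rightarrow> bool" where
  "cellular_embedding K L f0 f1 f2 \<sigma> \<longleftrightarrow>
     f0 ` verts K \<subseteq> verts L \<and> inj_on f0 (verts K) \<and>
     f1 ` edges K \<subseteq> edges L \<and> inj_on f1 (edges K) \<and>
     f2 ` faces K \<subseteq> faces L \<and> inj_on f2 (faces K) \<and>
     (\<forall>e \<in> edges K.
        (\<sigma> e \<and> esrc L (f1 e) = f0 (esrc K e) \<and> etgt L (f1 e) = f0 (etgt K e)) \<or>
        (\<not> \<sigma> e \<and> esrc L (f1 e) = f0 (etgt K e) \<and> etgt L (f1 e) = f0 (esrc K e))) \<and>
     (\<forall>F \<in> faces K. \<exists>k.
        fbdry L (f2 F) = rotate k (map (\<lambda>(e, d). (f1 e, d = \<sigma> e)) (fbdry K F)) \<or>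
        fbdry L (f2 F) = rotate k (rev_path (map (\<lambda>(e, d). (f1 e, d = \<sigma> e)) (fbdry K F))))"

definition cellularly_embeds :: "('v, 'e, 'f) cx2 \<Rightarrow> ('w, 'd, 'g) cx2 \<Rightarrow> bool" where
  "cellularly_embeds K L \<longleftrightarrow> (\<exists>f0 f1 f2 \<sigma>. cellular_embedding K L f0 f1 f2 \<sigma>)"

text \<open>Letters: (j, True) = a_j, (j, False) = a_j^{-1}. Relators indexed by
  r = 1..2m: r = i <= m gives [a_i,a_{i+1}] = a_i^{-1} a_{i+1}^{-1} a_i a_{i+1};
  r = m+j gives a_{m+j+1}^{-1} a_j a_{m+j+1} a_{m+j}^{-1}.\<close>

definition relator :: "nat \<Rightarrow> nat \<Rightarrow> (nat \<times> bool) list" where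
  "relator m r =
     (if r \<le> m then [(r, False), (r+1, False), (r, True), (r+1, True)]
      else (let j = r - m in [(m+j+1, False), (j, True), (m+j+1, True), (m+j, False)]))"

fun lift_word :: "nat \<Rightarrow> (nat \<Rightarrow> bool) \<Rightarrow> (nat \<times> bool) list
                   \<Rightarrow> (((nat \<Rightarrow> bool) \<times> nat) \<times> bool) list" where
  "lift_word m x [] = []"
| "lift_word m x ((j, s) # w) =
     (if s then ((x, j), True) # lift_word m (pi_act m j x) w
      else (let y = pi_act_inv m j x in ((y, j), False) # lift_word m y w))"

text \<open>The orbit of (0,...,0) under the generators; its points correspond to the
  cosets S\G (S = stabilizer of (0,...,0)) via Sg |-> (0,...,0) . g.\<close>
definition orbit0 :: "nat \<Rightarrow> (nat \<Rightarrow> bool) set" where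
  "orbit0 m = {y. (zero_tuple, y) \<in>
     {(x, z). x \<in> Hcube (2*m+1) \<and> z \<in> Hcube (2*m+1) \<and>
        (\<exists>j. 1 \<le> j \<and> j \<le> 2*m+1 \<and> (z = pi_act m j x \<or> x = pi_act m j z))}\<^sup>*}"

text \<open>The covering complex hat K_m of K_{m,m} corresponding to S: 0-cells the
  cosets S\G, a lift (x, j) of the loop a_j at each 0-cell x (from x to x . a_j),
  and a lift (x, r) of each 2-cell r at each 0-cell x, attached along the lift of
  the relator starting at x.\<close>
definition Khat :: "nat \<Rightarrow> (nat \<Rightarrow> bool, (nat \<Rightarrow> bool) \<times> nat, (nat \<Rightarrow> bool) \<times> nat) cx2" where
  "Khat m = \<lparr> verts = orbit0 m,
             edges = {(x, j). x \<in> orbit0 m \<and> 1 \<le> j \<and> j \<le> 2*m+1},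
             faces = {(x, r). x \<in> orbit0 m \<and> 1 \<le> r \<and> r \<le> 2*m},
             esrc = (\<lambda>(x, j). x),
             etgt = (\<lambda>(x, j). pi_act m j x),
             fbdry = (\<lambda>(x, r). lift_word m x (relator m r)) \<rparr>"

text \<open>1-cell (v, i, c): coordinate i carries the 1-cell [0,1] (c = False) or [1,2]
  (c = True) of C_2, the other coordinates carry the 0-cells given by v; v i = False.
  2-cell (v, i, j, c, d), i < j: coordinates i, j carry the 1-cells c, d.\<close>

definition torus_src :: "(nat \<Rightarrow> bool) \<times> nat \<times> bool \<Rightarrow> (nat \<Rightarrow> bool)" where
  "torus_src = (\<lambda>(v, i, c). if c then v(i := True) else v)"

definition torus_tgt :: "(nat \<Rightarrow> bool) \<times> nat \<times> bool \<Rightarrow> (nat \<Rightarrow> bool)" where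
  "torus_tgt = (\<lambda>(v, i, c). if c then v else v(i := True))"

definition torus_bdry ::
  "(nat \<Rightarrow> bool) \<times> nat \<times> nat \<times> bool \<times> bool \<Rightarrow> (((nat \<Rightarrow> bool) \<times> nat \<times> bool) \<times> bool) list" where
  "torus_bdry = (\<lambda>(v, i, j, c, d).
     [((v(j := d), i, c), True), ((v(i := \<not> c), j, d), True),
      ((v(j := \<not> d), i, c), False), ((v(i := c), j, d), False)])"

definition torus2 :: "nat \<Rightarrow> (nat \<Rightarrow> bool, (nat \<Rightarrow> bool) \<times> nat \<times> bool,
                               (nat \<Rightarrow> bool) \<times> nat \<times> nat \<times> bool \<times> bool) cx2" where
  "torus2 n = \<lparr> verts = Hcube n,
              edges = {(v, i, c). v \<in> Hcube n \<and> 1 \<le> i \<and> i \<le> n \<and> \<not> v i},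
              faces = {(v, i, j, c, d). v \<in> Hcube n \<and> 1 \<le> i \<and> i < j \<and> j \<le> n
                                         \<and> \<not> v i \<and> \<not> v j},
              esrc = torus_src,
              etgt = torus_tgt,
              fbdry = torus_bdry \<rparr>"

end

theory Submission
  imports Defs
begin



lemma flip_app: "flip c x i = (if i = c then \<not> x c else x i)" by (simp add: flip_def)
lemma swapc_app: "swapc a b x i = (if i = b then x a else if i = a then x b else x i)"
  by (simp add: swapc_def)
lemma flip_flip[simp]: "flip c (flip c x) = x" by (rule ext) (simp add: flip_app)
lemma swapc_swapc[simp]: "swapc a b (swapc a b x) = x" by (rule ext) (simp add: swapc_app)

lemma ps_Suc: "pi_stage m (Suc k) j x =
  (if j = Suc (Suc (m+k)) then flip (Suc (Suc (m+k))) x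
   else if \<not> x (Suc (Suc (m+k))) then pi_stage m k j x
   else flip (Suc (Suc (m+k))) (swapc (Suc k) (Suc (m+k))
          (pi_stage m k j (swapc (Suc k) (Suc (m+k)) (flip (Suc (Suc (m+k))) x)))))"
  by (simp add: Let_def)

declare pi_stage.simps(2)[simp del]

lemma ps_pres: "j \<le> m+k+1 \<Longrightarrow> m+k+1 < i \<Longrightarrow> pi_stage m k j x i = x i"
proof (induction k arbitrary: j x i)
  case 0 thus ?case by (simp add: flip_app)
next
  case (Suc k)
  show ?case
  proof (cases "j = Suc (Suc (m+k))")
    case True thus ?thesis using Suc.prems by (simp add: ps_Suc flip_app)
  next
    case False
    hence j: "j \<le> m+k+1" using Suc.prems by simp
    show ?thesis using Suc.IH[OF j] Suc.prems False by (auto simp add: ps_Suc flip_app swapc_app)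
  qed
qed

definition Tn :: "nat \<Rightarrow> nat \<Rightarrow> (nat \<Rightarrow> bool) \<Rightarrow> (nat \<Rightarrow> bool)" where
  "Tn m k x = swapc (Suc k) (Suc (m+k)) (flip (Suc (Suc (m+k))) x)"
definition Ti :: "nat \<Rightarrow> nat \<Rightarrow> (nat \<Rightarrow> bool) \<Rightarrow> (nat \<Rightarrow> bool)" where
  "Ti m k x = flip (Suc (Suc (m+k))) (swapc (Suc k) (Suc (m+k)) x)"

lemma Ti_Tn[simp]: "Ti m k (Tn m k x) = x" by (simp add: Ti_def Tn_def)
lemma Tn_Ti[simp]: "Tn m k (Ti m k x) = x" by (simp add: Ti_def Tn_def)
lemma Tn_n[simp]: "Tn m k x (Suc (Suc (m+k))) = (\<not> x (Suc (Suc (m+k))))"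
  by (simp add: Tn_def swapc_app flip_app)
lemma Ti_n[simp]: "Ti m k x (Suc (Suc (m+k))) = (\<not> x (Suc (Suc (m+k))))"
  by (simp add: Ti_def swapc_app flip_app)
lemma Ti_inj[simp]: "(Ti m k x = Ti m k y) = (x = y)" by (metis Tn_Ti)

lemma ps_n[simp]: "j \<le> m+k+1 \<Longrightarrow> pi_stage m k j x (Suc (Suc (m+k))) = x (Suc (Suc (m+k)))"
  by (rule ps_pres) auto

lemma ps_Suc_low: "j \<le> m+k+1 \<Longrightarrow> pi_stage m (Suc k) j x =
   (if x (Suc (Suc (m+k))) then Ti m k (pi_stage m k j (Tn m k x)) else pi_stage m k j x)"
  by (simp add: ps_Suc Ti_def Tn_def)

lemma ps_Suc_n[simp]: "j \<le> m+k+1 \<Longrightarrow> pi_stage m (Suc k) j x (Suc (Suc (m+k))) = x (Suc (Suc (m+k)))"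
  by (simp add: ps_Suc_low)

lemma ps_invol: "j \<le> m+k+1 \<Longrightarrow> pi_stage m k j (pi_stage m k j x) = x"
proof (induction k arbitrary: j x)
  case 0 thus ?case by simp
next
  case (Suc k)
  show ?case
  proof (cases "j = Suc (Suc (m+k))")
    case True thus ?thesis by (simp add: ps_Suc)
  next
    case False
    hence j: "j \<le> m+k+1" using Suc.prems by simp
    show ?thesis using Suc.IH[OF j] j by (simp add: ps_Suc_low)
  qed
qed

lemma ps_dist: "j \<le> m+k+1 \<Longrightarrow> j' \<le> m+k+1 \<Longrightarrow> j \<noteq> j' \<Longrightarrow> pi_stage m k j x \<noteq> pi_stage m k j' x"
proof (induction k arbitrary: j j' x)
  case 0 thus ?case by (auto simp: flip_def fun_eq_iff)
next
  case (Suc k)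
  show ?case
  proof (cases "j = Suc (Suc (m+k))")
    case True
    hence "j' \<le> m+k+1" using Suc.prems by simp
    thus ?thesis using True
      by (metis ps_Suc flip_app ps_Suc_n)
  next
    case False
    hence j: "j \<le> m+k+1" using Suc.prems by simp
    show ?thesis
    proof (cases "j' = Suc (Suc (m+k))")
      case True
      thus ?thesis using j by (metis ps_Suc flip_app ps_Suc_n)
    next
      case False
      hence j': "j' \<le> m+k+1" using Suc.prems by simp
      show ?thesis using Suc.IH[OF j j'] Suc.prems j j' by (simp add: ps_Suc_low)
    qed
  qed
qed

definition tr :: "nat \<Rightarrow> nat \<Rightarrow> nat \<Rightarrow> nat" where
  "tr a b c = (if c = a then b else if c = b then a else c)"

lemma swap_flip: "swapc a b (flip c (swapc a b y)) = flip (tr a b c) y"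
  by (rule ext) (auto simp: swapc_app flip_app tr_def)

lemma flip_comm: "flip a (flip b x) = flip b (flip a x)"
  by (rule ext) (auto simp: flip_app)

lemma ps_flip: "1 \<le> j \<Longrightarrow> j \<le> m+k+1 \<Longrightarrow> \<exists>c. 1 \<le> c \<and> c \<le> m+k+1 \<and> pi_stage m k j x = flip c x"
proof (induction k arbitrary: j x)
  case 0 thus ?case by auto
next
  case (Suc k)
  show ?case
  proof (cases "j = Suc (Suc (m+k))")
    case True thus ?thesis by (intro exI[of _ "Suc (Suc (m+k))"]) (simp add: ps_Suc)
  next
    case False
    hence j: "j \<le> m+k+1" using Suc.prems by simp
    show ?thesis
    proof (cases "x (Suc (Suc (m+k)))")
      case False thus ?thesis using Suc.IH[OF Suc.prems(1) j, of x] j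
        by (auto simp add: ps_Suc_low)
    next
      case True
      obtain c where c: "1 \<le> c" "c \<le> m+k+1" "pi_stage m k j (Tn m k x) = flip c (Tn m k x)"
        using Suc.IH[OF Suc.prems(1) j] by blast
      have "pi_stage m (Suc k) j x = flip (tr (Suc k) (Suc (m+k)) c) x"
        using True j c(3) 
        by (simp add: ps_Suc_low Ti_def Tn_def flip_comm[of "Suc (Suc (m+k))"] swap_flip)
      moreover have "1 \<le> tr (Suc k) (Suc (m+k)) c \<and> tr (Suc k) (Suc (m+k)) c \<le> m + Suc k + 1"
        using c by (auto simp: tr_def)
      ultimately show ?thesis by blast
    qed
  qed
qed

lemma ps_top: "pi_stage m k (m+k+1) x = flip (m+k+1) x"
  by (cases k) (simp_all add: ps_Suc)

lemma ps_fix: "k < j \<Longrightarrow> j \<le> m \<Longrightarrow> pi_stage m k j x = flip j x"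
proof (induction k arbitrary: x)
  case 0 thus ?case by simp
next
  case (Suc k)
  have "j \<le> m+k+1" using Suc.prems by simp
  thus ?case using Suc
    by (simp add: ps_Suc_low Ti_def Tn_def flip_comm[of "Suc (Suc (m+k))"] swap_flip tr_def)
qed

lemma ps_comm: "1 \<le> i \<Longrightarrow> i \<le> m \<Longrightarrow>
   pi_stage m k i (pi_stage m k (Suc i) x) = pi_stage m k (Suc i) (pi_stage m k i x)"
proof (induction k arbitrary: x)
  case 0 thus ?case by (simp add: flip_comm)
next
  case (Suc k)
  have "i \<le> m+k+1" "Suc i \<le> m+k+1" using Suc.prems by simp_all
  thus ?case using Suc by (simp add: ps_Suc_low)
qed

lemma ps_rel: "1 \<le> j \<Longrightarrow> j \<le> k \<Longrightarrow> k \<le> m \<Longrightarrow>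
   pi_stage m k (m+j+1) (pi_stage m k j (pi_stage m k (m+j+1) x)) = pi_stage m k (m+j) x"
proof (induction k arbitrary: x)
  case 0 thus ?case by simp
next
  case (Suc k)
  show ?case
  proof (cases "j \<le> k")
    case True
    have "j \<le> m+k+1" "m+j+1 \<le> m+k+1" "m+j \<le> m+k+1" using Suc.prems True by simp_all
    thus ?thesis using Suc True by (simp add: ps_Suc_low)
  next
    case False
    hence jk: "j = Suc k" using Suc.prems by simp
    have fk: "pi_stage m k (Suc k) y = flip (Suc k) y" for y using Suc.prems jk by (intro ps_fix) auto
    have ft: "pi_stage m k (Suc (m+k)) y = flip (Suc (m+k)) y" for y using ps_top[of m k y] by simp
    have e1: "pi_stage m (Suc k) (Suc (Suc (m+k))) y = flip (Suc (Suc (m+k))) y" for y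
      by (simp add: ps_Suc)
    have l1: "Suc k \<le> m+k+1" "Suc (m+k) \<le> m+k+1" by simp_all
    have fn: "flip (Suc (Suc (m+k))) y (Suc (Suc (m+k))) = (\<not> y (Suc (Suc (m+k))))" for y
      by (simp add: flip_app)
    show ?thesis using jk
      apply (simp add: e1)
      apply (cases "x (Suc (Suc (m+k)))")
      apply (simp_all add: ps_Suc_low[OF l1(1)] ps_Suc_low[OF l1(2)] fk ft fn Ti_def Tn_def)
      apply (simp_all add: flip_comm[of "Suc (Suc (m+k))"] swap_flip tr_def)
      done
  qed
qed




definition tedge :: "(nat \<Rightarrow> bool) \<Rightarrow> nat \<Rightarrow> bool \<Rightarrow> (nat \<Rightarrow> bool) \<times> nat \<times> bool" where
  "tedge x c s = (x(c := False), c, if s then x c else \<not> x c)"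

lemma rot1: "rotate (Suc 0) [a,b,c,d] = [b,c,d,a]" by (simp add: rotate_def)
lemma rot2: "rotate (Suc (Suc 0)) [a,b,c,d] = [c,d,a,b]" by (simp add: rotate_def)
lemma rot3: "rotate (Suc (Suc (Suc 0))) [a,b,c,d] = [d,a,b,c]" by (simp add: rotate_def)

lemma Hcube_upd: "x \<in> Hcube N \<Longrightarrow> x(c := False) \<in> Hcube N" by (auto simp: Hcube_def)

lemma sq1:
  assumes x: "x \<in> Hcube N" and pq: "1 \<le> p" "p \<le> N" "1 \<le> q" "q \<le> N" "p \<noteq> q"
  defines "P \<equiv> [(tedge x p False, False), (tedge (flip p x) q False, False),
     (tedge (flip q (flip p x)) p True, True), (tedge (flip p (flip q (flip p x))) q True, True)]"
  shows "\<exists>G\<in>faces (torus2 N). \<exists>k. torus_bdry G = rotate k P \<or> torus_bdry G = rotate k (rev_path P)"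
proof (cases "p < q")
  case True
  let ?G = "(x(p:=False, q:=False), p, q, \<not> x p, \<not> x q)"
  have "?G \<in> faces (torus2 N)" using x pq True by (auto simp: torus2_def Hcube_def)
  moreover have "torus_bdry ?G = rotate (Suc (Suc 0)) P"
    unfolding P_def rot2 using pq by (auto simp: torus_bdry_def tedge_def fun_eq_iff flip_app)
  ultimately show ?thesis by blast
next
  case False
  let ?G = "(x(p:=False, q:=False), q, p, \<not> x q, \<not> x p)"
  have "?G \<in> faces (torus2 N)" using x pq False by (auto simp: torus2_def Hcube_def)
  moreover have "torus_bdry ?G = rotate (Suc (Suc 0)) (rev_path P)"
    unfolding P_def rev_path_def using pq by (auto simp: rot2 torus_bdry_def tedge_def fun_eq_iff flip_app)
  ultimately show ?thesis by blast
qed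

lemma sq2:
  assumes x: "x \<in> Hcube N" and pq: "1 \<le> p" "p \<le> N" "1 \<le> q" "q \<le> N" "p \<noteq> q"
  defines "P \<equiv> [(tedge x p False, False), (tedge (flip p x) q True, True),
     (tedge (flip q (flip p x)) p True, True), (tedge (flip p (flip q (flip p x))) q False, False)]"
  shows "\<exists>G\<in>faces (torus2 N). \<exists>k. torus_bdry G = rotate k P \<or> torus_bdry G = rotate k (rev_path P)"
proof (cases "p < q")
  case True
  let ?G = "(x(p:=False, q:=False), p, q, \<not> x p, x q)"
  have "?G \<in> faces (torus2 N)" using x pq True by (auto simp: torus2_def Hcube_def)
  moreover have "torus_bdry ?G = rotate (Suc (Suc (Suc 0))) (rev_path P)"
    unfolding P_def rev_path_def using pq by (auto simp: rot3 torus_bdry_def tedge_def fun_eq_iff flip_app)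
  ultimately show ?thesis by blast
next
  case False
  let ?G = "(x(p:=False, q:=False), q, p, x q, \<not> x p)"
  have "?G \<in> faces (torus2 N)" using x pq False by (auto simp: torus2_def Hcube_def)
  moreover have "torus_bdry ?G = rotate (Suc 0) P"
    unfolding P_def using pq by (auto simp: rot1 torus_bdry_def tedge_def fun_eq_iff flip_app)
  ultimately show ?thesis by blast
qed

lemma word:
  assumes "1 \<le> m" "1 \<le> r" "r \<le> 2*m" "1 \<le> r'" "r' \<le> 2*m" "t < 4"
    "(if b then relator m r else rev_path (relator m r)) =
     rotate t (if b' then relator m r' else rev_path (relator m r'))"
  shows "r = r' \<and> b = b' \<and> t = 0"
proof -
  have t: "t = 0 \<or> t = Suc 0 \<or> t = Suc (Suc 0) \<or> t = Suc (Suc (Suc 0))" using assms(6) by auto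
  show ?thesis using assms(1-5,7) t
    by (auto simp: relator_def rev_path_def Let_def rot1 rot2 rot3 split: if_splits)
qed




lemma pa_invol: "j \<le> 2*m+1 \<Longrightarrow> pi_act m j (pi_act m j x) = x"
  unfolding pi_act_def by (rule ps_invol) simp
lemma pa_dist: "j \<le> 2*m+1 \<Longrightarrow> j' \<le> 2*m+1 \<Longrightarrow> j \<noteq> j' \<Longrightarrow> pi_act m j x \<noteq> pi_act m j' x"
  unfolding pi_act_def by (rule ps_dist) auto
lemma pa_flip: "1 \<le> j \<Longrightarrow> j \<le> 2*m+1 \<Longrightarrow> \<exists>c. 1 \<le> c \<and> c \<le> 2*m+1 \<and> pi_act m j x = flip c x"
  unfolding pi_act_def using ps_flip[of j m m x] by auto
lemma pa_comm: "1 \<le> i \<Longrightarrow> i \<le> m \<Longrightarrow>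
   pi_act m i (pi_act m (Suc i) x) = pi_act m (Suc i) (pi_act m i x)"
  unfolding pi_act_def by (rule ps_comm)
lemma pa_rel: "1 \<le> j \<Longrightarrow> j \<le> m \<Longrightarrow>
   pi_act m (m+j+1) (pi_act m j (pi_act m (m+j+1) x)) = pi_act m (m+j) x"
  unfolding pi_act_def by (rule ps_rel) auto

definition cc :: "nat \<Rightarrow> nat \<Rightarrow> (nat \<Rightarrow> bool) \<Rightarrow> nat" where
  "cc m j x = (SOME c. 1 \<le> c \<and> c \<le> 2*m+1 \<and> pi_act m j x = flip c x)"

lemma cc_spec: "1 \<le> j \<Longrightarrow> j \<le> 2*m+1 \<Longrightarrow>
   1 \<le> cc m j x \<and> cc m j x \<le> 2*m+1 \<and> pi_act m j x = flip (cc m j x) x"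
  unfolding cc_def by (rule someI_ex) (rule pa_flip)

lemma flip_eq: "flip c x = flip c' x \<Longrightarrow> c = c'"
proof -
  assume "flip c x = flip c' x"
  hence "flip c x c = flip c' x c" by simp
  thus ?thesis by (simp add: flip_app split: if_splits)
qed

lemma cc_pa: "1 \<le> j \<Longrightarrow> j \<le> 2*m+1 \<Longrightarrow> cc m j (pi_act m j x) = cc m j x"
proof -
  assume j: "1 \<le> j" "j \<le> 2*m+1"
  let ?y = "pi_act m j x"
  have "flip (cc m j ?y) ?y = x" using cc_spec[OF j, of ?y] pa_invol[OF j(2)] by simp
  also have "x = flip (cc m j x) ?y" using cc_spec[OF j, of x] by simp
  finally show ?thesis by (rule flip_eq)
qed

lemma Hcube_flip: "x \<in> Hcube N \<Longrightarrow> 1 \<le> c \<Longrightarrow> c \<le> N \<Longrightarrow> flip c x \<in> Hcube N"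
  by (auto simp: Hcube_def flip_app)

lemma pa_Hcube: "x \<in> Hcube (2*m+1) \<Longrightarrow> 1 \<le> j \<Longrightarrow> j \<le> 2*m+1 \<Longrightarrow> pi_act m j x \<in> Hcube (2*m+1)"
  using cc_spec[of j m x] Hcube_flip[of x "2*m+1" "cc m j x"] by simp

lemma pa_inv: "x \<in> Hcube (2*m+1) \<Longrightarrow> 1 \<le> j \<Longrightarrow> j \<le> 2*m+1 \<Longrightarrow> pi_act_inv m j x = pi_act m j x"
proof -
  assume h: "x \<in> Hcube (2*m+1)" "1 \<le> j" "j \<le> 2*m+1"
  show ?thesis unfolding pi_act_inv_def
  proof (rule the_equality)
    show "pi_act m j x \<in> Hcube (2*m+1) \<and> pi_act m j (pi_act m j x) = x"
      using h pa_Hcube pa_invol by simp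
  next
    fix y assume "y \<in> Hcube (2*m+1) \<and> pi_act m j y = x"
    thus "y = pi_act m j x" using pa_invol[of j m y] h by auto
  qed
qed

lemma orbit0_Hcube: "x \<in> orbit0 m \<Longrightarrow> x \<in> Hcube (2*m+1)"
proof -
  assume "x \<in> orbit0 m"
  hence "(zero_tuple, x) \<in> {(x, z). x \<in> Hcube (2*m+1) \<and> z \<in> Hcube (2*m+1) \<and>
        (\<exists>j. 1 \<le> j \<and> j \<le> 2*m+1 \<and> (z = pi_act m j x \<or> x = pi_act m j z))}\<^sup>*"
    by (simp add: orbit0_def)
  thus ?thesis
    by (induction rule: rtrancl_induct) (auto simp: Hcube_def zero_tuple_def)
qed

lemma orbit0_pa: assumes "x \<in> orbit0 m" "1 \<le> j" "j \<le> 2*m+1" shows "pi_act m j x \<in> orbit0 m"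
proof -
  define R where "R = {(x, z). x \<in> Hcube (2*m+1) \<and> z \<in> Hcube (2*m+1) \<and>
        (\<exists>j. 1 \<le> j \<and> j \<le> 2*m+1 \<and> (z = pi_act m j x \<or> x = pi_act m j z))}"
  have o: "orbit0 m = {y. (zero_tuple, y) \<in> R\<^sup>*}" by (simp add: orbit0_def R_def)
  have xH: "x \<in> Hcube (2*m+1)" by (rule orbit0_Hcube[OF assms(1)])
  have yH: "pi_act m j x \<in> Hcube (2*m+1)" by (rule pa_Hcube[OF xH assms(2,3)])
  have "(x, pi_act m j x) \<in> R" unfolding R_def using xH yH assms(2,3) by blast
  moreover have "(zero_tuple, x) \<in> R\<^sup>*" using assms(1) o by simp
  ultimately show ?thesis using o by simp
qed





lemma lift_step: "x \<in> Hcube (2*m+1) \<Longrightarrow> 1 \<le> j \<Longrightarrow> j \<le> 2*m+1 \<Longrightarrow>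
   lift_word m x ((j,s)#w) = ((if s then x else pi_act m j x, j), s) # lift_word m (pi_act m j x) w"
  by (simp add: pa_inv Let_def)

definition f1 :: "nat \<Rightarrow> (nat \<Rightarrow> bool) \<times> nat \<Rightarrow> (nat \<Rightarrow> bool) \<times> nat \<times> bool" where
  "f1 m = (\<lambda>(y, j). (y(cc m j y := False), cc m j y, y (cc m j y)))"

definition hh :: "nat \<Rightarrow> ((nat \<Rightarrow> bool) \<times> nat) \<times> bool \<Rightarrow> ((nat \<Rightarrow> bool) \<times> nat \<times> bool) \<times> bool" where
  "hh m = (\<lambda>(e, d). (f1 m e, d))"

lemma hh_step: "1 \<le> j \<Longrightarrow> j \<le> 2*m+1 \<Longrightarrow>
   hh m ((if s then x else pi_act m j x, j), s) = (tedge x (cc m j x) s, s)"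
proof -
  assume j: "1 \<le> j" "j \<le> 2*m+1"
  have e: "pi_act m j x = flip (cc m j x) x" using cc_spec[OF j] by blast
  have c: "cc m j (flip (cc m j x) x) = cc m j x" using cc_pa[OF j, of x] e by simp
  show ?thesis
    by (cases s) (auto simp: hh_def f1_def tedge_def c fun_eq_iff flip_app e)
qed

lemma flip4: "flip d (flip c (flip b (flip a x))) = x \<Longrightarrow> a \<noteq> b \<Longrightarrow> b \<noteq> c \<Longrightarrow> c \<noteq> d \<Longrightarrow> d \<noteq> a
   \<Longrightarrow> c = a \<and> d = b"
proof -
  assume h: "flip d (flip c (flip b (flip a x))) = x" "a \<noteq> b" "b \<noteq> c" "c \<noteq> d" "d \<noteq> a"
  have 1: "flip d (flip c (flip b (flip a x))) a = x a" using h(1) by simp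
  have 2: "flip d (flip c (flip b (flip a x))) b = x b" using h(1) by simp
  show ?thesis using 1 2 h(2-5) by (auto simp: flip_app split: if_splits)
qed

lemma nb: "1 \<le> j \<Longrightarrow> j \<le> 2*m+1 \<Longrightarrow> 1 \<le> j' \<Longrightarrow> j' \<le> 2*m+1 \<Longrightarrow> j \<noteq> j' \<Longrightarrow>
   pi_act m j' (pi_act m j y) \<noteq> y"
  by (metis pa_dist pa_invol)

lemma gen_face:
  assumes x: "x \<in> Hcube (2*m+1)"
    and js: "1 \<le> j0" "j0 \<le> 2*m+1" "1 \<le> j1" "j1 \<le> 2*m+1" "1 \<le> j2" "j2 \<le> 2*m+1" "1 \<le> j3" "j3 \<le> 2*m+1"
    and d: "j0 \<noteq> j1" "j1 \<noteq> j2" "j2 \<noteq> j3" "j3 \<noteq> j0"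
    and cl: "pi_act m j3 (pi_act m j2 (pi_act m j1 (pi_act m j0 x))) = x"
    and s: "(s0,s1,s2,s3) = (False,False,True,True) \<or> (s0,s1,s2,s3) = (False,True,True,False)"
  defines "P \<equiv> map (hh m) (lift_word m x [(j0,s0),(j1,s1),(j2,s2),(j3,s3)])"
  shows "\<exists>G\<in>faces (torus2 (2*m+1)). \<exists>k. torus_bdry G = rotate k P \<or> torus_bdry G = rotate k (rev_path P)"
proof -
  define u1 where "u1 = pi_act m j0 x"
  define u2 where "u2 = pi_act m j1 u1"
  define u3 where "u3 = pi_act m j2 u2"
  define c0 where "c0 = cc m j0 x"
  define c1 where "c1 = cc m j1 u1"
  define c2 where "c2 = cc m j2 u2"
  define c3 where "c3 = cc m j3 u3"
  have h1: "u1 \<in> Hcube (2*m+1)" "u2 \<in> Hcube (2*m+1)" "u3 \<in> Hcube (2*m+1)"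
  proof -
    show 1: "u1 \<in> Hcube (2*m+1)" unfolding u1_def by (rule pa_Hcube[OF x js(1,2)])
    show 2: "u2 \<in> Hcube (2*m+1)" unfolding u2_def by (rule pa_Hcube[OF 1 js(3,4)])
    show "u3 \<in> Hcube (2*m+1)" unfolding u3_def by (rule pa_Hcube[OF 2 js(5,6)])
  qed
  have e0: "u1 = flip c0 x" using cc_spec[OF js(1,2)] u1_def c0_def by blast
  have e1: "u2 = flip c1 u1" using cc_spec[OF js(3,4)] u2_def c1_def by blast
  have e2: "u3 = flip c2 u2" using cc_spec[OF js(5,6)] u3_def c2_def by blast
  have x3: "pi_act m j3 u3 = x" using cl by (simp add: u1_def u2_def u3_def)
  have e3: "x = flip c3 u3" using cc_spec[OF js(7,8), of u3] c3_def x3 by simp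
  have r: "1 \<le> c0" "c0 \<le> 2*m+1" "1 \<le> c1" "c1 \<le> 2*m+1"
    using cc_spec[OF js(1,2)] cc_spec[OF js(3,4)] c0_def c1_def by auto
  have n01: "c0 \<noteq> c1"
  proof
    assume c: "c0 = c1"
    have "u2 = x" using e0 e1 c by simp
    hence "pi_act m j1 (pi_act m j0 x) = x" unfolding u2_def u1_def .
    thus False using nb[OF js(1-4) d(1)] by blast
  qed
  have n12: "c1 \<noteq> c2"
  proof
    assume c: "c1 = c2"
    have "u3 = u1" using e1 e2 c by simp
    hence "pi_act m j2 (pi_act m j1 u1) = u1" unfolding u3_def u2_def .
    thus False using nb[OF js(3-6) d(2)] by blast
  qed
  have n23: "c2 \<noteq> c3"
  proof
    assume c: "c2 = c3"
    have xu: "x = u2" by (simp only: e3 c[symmetric] e2 flip_flip)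
    have "pi_act m j3 (pi_act m j2 u2) = u2" using x3 xu unfolding u3_def by simp
    thus False using nb[OF js(5-8) d(3)] by blast
  qed
  have u3x: "u3 = flip c3 x" by (subst e3) simp
  have n30: "c3 \<noteq> c0"
  proof
    assume c: "c3 = c0"
    have "pi_act m j0 (pi_act m j3 u3) = pi_act m j0 x" using x3 by simp
    also have "\<dots> = u1" by (simp add: u1_def)
    also have "\<dots> = flip c0 x" by (rule e0)
    also have "\<dots> = u3" using u3x c by simp
    finally have "pi_act m j0 (pi_act m j3 u3) = u3" .
    thus False using nb[OF js(7,8,1,2) d(4)] by blast
  qed
  have "x = flip c3 (flip c2 (flip c1 (flip c0 x)))" using e3 unfolding e2 e1 e0 .
  then have "flip c3 (flip c2 (flip c1 (flip c0 x))) = x" by (rule sym)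
  hence "c2 = c0 \<and> c3 = c1" using flip4 n01 n12 n23 n30 by blast
  hence c23: "c2 = c0" "c3 = c1" by auto
  have L: "lift_word m x [(j0,s0),(j1,s1),(j2,s2),(j3,s3)] =
     [((if s0 then x else pi_act m j0 x, j0), s0), ((if s1 then u1 else pi_act m j1 u1, j1), s1),
      ((if s2 then u2 else pi_act m j2 u2, j2), s2), ((if s3 then u3 else pi_act m j3 u3, j3), s3)]"
    by (simp only: lift_step[OF x js(1,2)] u1_def[symmetric] lift_step[OF h1(1) js(3,4)]
      u2_def[symmetric] lift_step[OF h1(2) js(5,6)] u3_def[symmetric] lift_step[OF h1(3) js(7,8)]
      lift_word.simps(1))
  have P0: "P = [(tedge x c0 s0, s0), (tedge u1 c1 s1, s1), (tedge u2 c2 s2, s2), (tedge u3 c3 s3, s3)]"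
    unfolding P_def L
    by (simp only: list.map hh_step[OF js(1,2)] hh_step[OF js(3,4)] hh_step[OF js(5,6)] hh_step[OF js(7,8)]
       c0_def[symmetric] c1_def[symmetric] c2_def[symmetric] c3_def[symmetric])
  have P: "P = [(tedge x c0 s0, s0), (tedge (flip c0 x) c1 s1, s1),
     (tedge (flip c1 (flip c0 x)) c0 s2, s2), (tedge (flip c0 (flip c1 (flip c0 x))) c1 s3, s3)]"
    unfolding P0 by (simp only: e2 e1 e0 c23)
  show ?thesis using s
  proof
    assume "(s0,s1,s2,s3) = (False,False,True,True)"
    thus ?thesis using sq1[OF x r n01] P by simp
  next
    assume "(s0,s1,s2,s3) = (False,True,True,False)"
    thus ?thesis using sq2[OF x r n01] P by simp
  qed
qed




definition img :: "nat \<Rightarrow> (nat \<Rightarrow> bool) \<times> nat \<Rightarrow> (((nat \<Rightarrow> bool) \<times> nat \<times> bool) \<times> bool) list" where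
  "img m F = map (hh m) (fbdry (Khat m) F)"

definition f2 :: "nat \<Rightarrow> (nat \<Rightarrow> bool) \<times> nat \<Rightarrow> (nat \<Rightarrow> bool) \<times> nat \<times> nat \<times> bool \<times> bool" where
  "f2 m F = (SOME G. G \<in> faces (torus2 (2*m+1)) \<and>
     (\<exists>k. torus_bdry G = rotate k (img m F) \<or> torus_bdry G = rotate k (rev_path (img m F))))"

lemma fbdry_Khat: "fbdry (Khat m) (x, r) = lift_word m x (relator m r)"
  by (simp add: Khat_def)

lemma face_img:
  assumes m: "1 \<le> m" and F: "F \<in> faces (Khat m)"
  shows "\<exists>G\<in>faces (torus2 (2*m+1)). \<exists>k. torus_bdry G = rotate k (img m F) \<or> torus_bdry G = rotate k (rev_path (img m F))"
proof -
  obtain x r where Fx: "F = (x, r)" and xo: "x \<in> orbit0 m" and r: "1 \<le> r" "r \<le> 2*m"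
    using F by (auto simp: Khat_def)
  have x: "x \<in> Hcube (2*m+1)" by (rule orbit0_Hcube[OF xo])
  have im: "img m F = map (hh m) (lift_word m x (relator m r))" by (simp add: img_def Fx fbdry_Khat)
  show ?thesis
  proof (cases "r \<le> m")
    case True
    have rel: "relator m r = [(r,False),(Suc r,False),(r,True),(Suc r,True)]"
      using True by (simp add: relator_def)
    have cl: "pi_act m (Suc r) (pi_act m r (pi_act m (Suc r) (pi_act m r x))) = x"
    proof -
      have "pi_act m r (pi_act m (Suc r) (pi_act m r x)) = pi_act m (Suc r) (pi_act m r (pi_act m r x))"
        using pa_comm[OF r(1) True] by blast
      thus ?thesis using pa_invol[of r m] pa_invol[of "Suc r" m] True by simp
    qed
    show ?thesis unfolding im rel
      by (rule gen_face[OF x _ _ _ _ _ _ _ _ _ _ _ _ cl]) (use r True in auto)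
  next
    case False
    define j where "j = r - m"
    have j: "1 \<le> j" "j \<le> m" using False r by (auto simp: j_def)
    have rel: "relator m r = [(m+j+1,False),(j,True),(m+j+1,True),(m+j,False)]"
      using False by (simp add: relator_def j_def Let_def)
    have cl: "pi_act m (m+j) (pi_act m (m+j+1) (pi_act m j (pi_act m (m+j+1) x))) = x"
      using pa_rel[OF j] pa_invol[of "m+j" m] j by simp
    show ?thesis unfolding im rel
      by (rule gen_face[OF x _ _ _ _ _ _ _ _ _ _ _ _ cl]) (use j m in auto)
  qed
qed

lemma lift_labels: "map (\<lambda>((y, j), s). (j, s)) (lift_word m x w) = w"
  by (induction m x w rule: lift_word.induct) (auto simp: Let_def)

lemma lift_edges: "x \<in> orbit0 m \<Longrightarrow> \<forall>(j,s)\<in>set w. 1 \<le> j \<and> j \<le> 2*m+1 \<Longrightarrow>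
   \<forall>(e,s)\<in>set (lift_word m x w). e \<in> edges (Khat m)"
proof (induction w arbitrary: x)
  case Nil thus ?case by simp
next
  case (Cons a w)
  obtain j s where a: "a = (j, s)" by (cases a)
  have j: "1 \<le> j" "j \<le> 2*m+1" using Cons.prems a by auto
  have xH: "x \<in> Hcube (2*m+1)" by (rule orbit0_Hcube[OF Cons.prems(1)])
  have y: "pi_act m j x \<in> orbit0 m" by (rule orbit0_pa[OF Cons.prems(1) j])
  have IH: "\<forall>(e,s)\<in>set (lift_word m (pi_act m j x) w). e \<in> edges (Khat m)"
    using Cons.IH[OF y] Cons.prems(2) by auto
  show ?case using IH y Cons.prems(1) j unfolding a lift_step[OF xH j]
    by (auto simp: Khat_def)
qed

lemma rel_range: "1 \<le> r \<Longrightarrow> r \<le> 2*m \<Longrightarrow> \<forall>(j,s)\<in>set (relator m r). 1 \<le> j \<and> j \<le> 2*m+1"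
  by (auto simp: relator_def Let_def)

lemma rel_hd: "1 \<le> r \<Longrightarrow> r \<le> 2*m \<Longrightarrow> \<exists>j0 w. relator m r = (j0, False) # w \<and> 1 \<le> j0 \<and> j0 \<le> 2*m+1"
  by (auto simp: relator_def Let_def)

lemma f1_inj: "inj_on (f1 m) (edges (Khat m))"
proof (rule inj_onI)
  fix e e' assume e: "e \<in> edges (Khat m)" and e': "e' \<in> edges (Khat m)" and eq: "f1 m e = f1 m e'"
  obtain y j where ey: "e = (y, j)" and j: "1 \<le> j" "j \<le> 2*m+1" using e by (auto simp: Khat_def)
  obtain y' j' where ey': "e' = (y', j')" and j': "1 \<le> j'" "j' \<le> 2*m+1" using e' by (auto simp: Khat_def)
  have c: "cc m j y = cc m j' y'" and u: "y(cc m j y := False) = y'(cc m j' y' := False)"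
    and v: "y (cc m j y) = y' (cc m j' y')"
    using eq by (auto simp: f1_def ey ey')
  have yy: "y = y'"
  proof
    fix i show "y i = y' i" using fun_cong[OF u, of i] v c by (auto split: if_splits)
  qed
  have "pi_act m j y = pi_act m j' y"
    using cc_spec[OF j, of y] cc_spec[OF j', of y'] c yy by simp
  hence "j = j'" using pa_dist[OF j(2) j'(2)] by blast
  thus "e = e'" using ey ey' yy by simp
qed

lemma rot_cancel: "length X = n \<Longrightarrow> length Y = n \<Longrightarrow> 0 < n \<Longrightarrow> rotate k X = rotate k' Y \<Longrightarrow>
   X = rotate ((n - k mod n + k') mod n) Y"
proof -
  assume h: "length X = n" "length Y = n" "0 < n" "rotate k X = rotate k' Y"
  have "(n - k mod n + k) mod n = 0"
  proof -
    have "n - k mod n + k = n + (k - k mod n)" using h(3) by (simp add: mod_le_divisor)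
    also have "k - k mod n = n * (k div n)" by (simp add: minus_mod_eq_mult_div)
    finally show ?thesis by simp
  qed
  hence "X = rotate (n - k mod n) (rotate k X)" using h(1) by (simp add: rotate_rotate)
  also have "\<dots> = rotate (n - k mod n + k') Y" using h(4) by (simp add: rotate_rotate)
  also have "\<dots> = rotate ((n - k mod n + k') mod n) Y" using h(2) by (subst rotate_conv_mod) simp
  finally show ?thesis .
qed

lemma map_rev_path: "map (\<lambda>(t, d). (g t, d)) (rev_path Q) = rev_path (map (\<lambda>(t, d). (g t, d)) Q)"
  by (induction Q) (auto simp: rev_path_def)

lemma rev_path_rev_path[simp]: "rev_path (rev_path Q) = Q"
  by (induction Q) (auto simp: rev_path_def)

lemma length_rev_path[simp]: "length (rev_path Q) = length Q" by (simp add: rev_path_def)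

lemma length_lift[simp]: "length (lift_word m x w) = length w"
  by (induction m x w rule: lift_word.induct) (auto simp: Let_def)




lemma f2_spec: "1 \<le> m \<Longrightarrow> F \<in> faces (Khat m) \<Longrightarrow> f2 m F \<in> faces (torus2 (2*m+1)) \<and>
   (\<exists>k. torus_bdry (f2 m F) = rotate k (img m F) \<or> torus_bdry (f2 m F) = rotate k (rev_path (img m F)))"
  unfolding f2_def by (rule someI_ex) (use face_img in blast)

definition AA :: "bool \<Rightarrow> ('a \<times> bool) list \<Rightarrow> ('a \<times> bool) list" where
  "AA b P = (if b then P else rev_path P)"

lemma Lam_img:
  assumes F: "F = (x, r)" "F \<in> faces (Khat m)"
  shows "map (\<lambda>(t, d). (snd (inv_into (edges (Khat m)) (f1 m) t), d)) (img m F) = relator m r"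
proof -
  have xo: "x \<in> orbit0 m" and r: "1 \<le> r" "r \<le> 2*m" using F by (auto simp: Khat_def)
  have ed: "\<forall>(e,s)\<in>set (lift_word m x (relator m r)). e \<in> edges (Khat m)"
    by (rule lift_edges[OF xo rel_range[OF r]])
  have "map (\<lambda>(t, d). (snd (inv_into (edges (Khat m)) (f1 m) t), d)) (img m F)
     = map (\<lambda>((y, j), s). (j, s)) (lift_word m x (relator m r))"
    unfolding img_def F(1) fbdry_Khat map_map
  proof (rule map_cong[OF refl])
    fix a assume a: "a \<in> set (lift_word m x (relator m r))"
    obtain y j s where as: "a = ((y, j), s)" by (metis prod.collapse)
    have "(y, j) \<in> edges (Khat m)" using ed a as by auto
    thus "((\<lambda>(t, d). (snd (inv_into (edges (Khat m)) (f1 m) t), d)) \<circ> hh m) a = (\<lambda>((y, j), s). (j, s)) a"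
      using as f1_inj by (simp add: hh_def inv_into_f_f)
  qed
  thus ?thesis by (simp add: lift_labels)
qed

lemma f2_inj: assumes m: "1 \<le> m" shows "inj_on (f2 m) (faces (Khat m))"
proof (rule inj_onI)
  fix F F' assume F: "F \<in> faces (Khat m)" and F': "F' \<in> faces (Khat m)" and eq: "f2 m F = f2 m F'"
  obtain x r where Fx: "F = (x, r)" and xo: "x \<in> orbit0 m" and r: "1 \<le> r" "r \<le> 2*m"
    using F by (auto simp: Khat_def)
  obtain x' r' where Fx': "F' = (x', r')" and xo': "x' \<in> orbit0 m" and r': "1 \<le> r'" "r' \<le> 2*m"
    using F' by (auto simp: Khat_def)
  define P where "P = img m F"
  define P' where "P' = img m F'"
  define Lam :: "(((nat \<Rightarrow> bool) \<times> nat \<times> bool) \<times> bool) list \<Rightarrow> (nat \<times> bool) list"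
    where "Lam = map (\<lambda>(t, d). (snd (inv_into (edges (Khat m)) (f1 m) t), d))"
  have LP: "Lam P = relator m r" unfolding Lam_def P_def by (rule Lam_img[OF Fx F])
  have LP': "Lam P' = relator m r'" unfolding Lam_def P'_def by (rule Lam_img[OF Fx' F'])
  have lenP: "length P = 4" by (simp add: P_def img_def Fx fbdry_Khat relator_def Let_def)
  have lenP': "length P' = 4" by (simp add: P'_def img_def Fx' fbdry_Khat relator_def Let_def)
  obtain k b where kb: "torus_bdry (f2 m F) = rotate k (AA b P)"
    using f2_spec[OF m F] unfolding P_def AA_def by (metis (full_types))
  obtain k' b' where kb': "torus_bdry (f2 m F') = rotate k' (AA b' P')"
    using f2_spec[OF m F'] unfolding P'_def AA_def by (metis (full_types))
  define t where "t = (4 - k mod 4 + k') mod 4"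
  have "rotate k (AA b P) = rotate k' (AA b' P')" using kb kb' eq by simp
  hence At: "AA b P = rotate t (AA b' P')" unfolding t_def
    by (rule rot_cancel[rotated 3]) (simp_all add: AA_def lenP lenP')
  have LA: "Lam (AA c Q) = AA c (Lam Q)" for c Q
    unfolding Lam_def AA_def by (simp add: map_rev_path)
  have "AA b (relator m r) = rotate t (AA b' (relator m r'))"
  proof -
    have LR: "Lam (rotate t X) = rotate t (Lam X)" for X unfolding Lam_def by (simp add: rotate_map)
    have "Lam (AA b P) = Lam (rotate t (AA b' P'))" using At by simp
    hence "AA b (Lam P) = rotate t (AA b' (Lam P'))" by (simp only: LA LR)
    thus ?thesis by (simp only: LP LP')
  qed
  hence w: "r = r' \<and> b = b' \<and> t = 0"
    by (intro word[OF m r r']) (simp_all add: t_def AA_def)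
  hence "AA b P = AA b P'" using At by simp
  hence PP: "P = P'" unfolding AA_def by (cases b) (auto dest: arg_cong[of _ _ rev_path])
  obtain j0 w0 where rh: "relator m r = (j0, False) # w0" "1 \<le> j0" "j0 \<le> 2*m+1"
    using rel_hd[OF r] by blast
  have xH: "x \<in> Hcube (2*m+1)" by (rule orbit0_Hcube[OF xo])
  have xH': "x' \<in> Hcube (2*m+1)" by (rule orbit0_Hcube[OF xo'])
  have "hh m ((pi_act m j0 x, j0), False) = hh m ((pi_act m j0 x', j0), False)"
  proof -
    have rr: "r' = r" using w by simp
    show ?thesis
      using PP unfolding P_def P'_def img_def Fx Fx' fbdry_Khat rr rh(1)
        lift_step[OF xH rh(2,3)] lift_step[OF xH' rh(2,3)] by simp
  qed
  hence f: "f1 m (pi_act m j0 x, j0) = f1 m (pi_act m j0 x', j0)" by (simp add: hh_def)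
  have "(pi_act m j0 x, j0) \<in> edges (Khat m)" "(pi_act m j0 x', j0) \<in> edges (Khat m)"
    using orbit0_pa[OF xo rh(2,3)] orbit0_pa[OF xo' rh(2,3)] rh by (auto simp: Khat_def)
  hence "pi_act m j0 x = pi_act m j0 x'" using f f1_inj inj_onD by fastforce
  hence "x = x'" using pa_invol[OF rh(3)] by metis
  thus "F = F'" using Fx Fx' w by simp
qed




theorem proposition6p2:
  fixes m :: nat
  assumes "m \<ge> 1"
  shows "cellularly_embeds (Khat m) (torus2 (2*m+1))"
proof -
  have m: "1 \<le> m" using assms by simp
  have V: "id ` verts (Khat m) \<subseteq> verts (torus2 (2*m+1))"
    using orbit0_Hcube by (auto simp: Khat_def torus2_def)
  have E1: "f1 m ` edges (Khat m) \<subseteq> edges (torus2 (2*m+1))"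
  proof
    fix t assume "t \<in> f1 m ` edges (Khat m)"
    then obtain y j where t: "t = f1 m (y, j)" and yo: "y \<in> orbit0 m" and j: "1 \<le> j" "j \<le> 2*m+1"
      by (auto simp: Khat_def)
    have yH: "y \<in> Hcube (2*m+1)" by (rule orbit0_Hcube[OF yo])
    show "t \<in> edges (torus2 (2*m+1))"
      using cc_spec[OF j, of y] Hcube_upd[OF yH] by (auto simp: t f1_def torus2_def)
  qed
  have F1: "f2 m ` faces (Khat m) \<subseteq> faces (torus2 (2*m+1))" using f2_spec[OF m] by blast
  have ES: "\<forall>e\<in>edges (Khat m).
        (True \<and> esrc (torus2 (2*m+1)) (f1 m e) = id (esrc (Khat m) e) \<and>
                etgt (torus2 (2*m+1)) (f1 m e) = id (etgt (Khat m) e)) \<or>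
        (\<not> True \<and> esrc (torus2 (2*m+1)) (f1 m e) = id (etgt (Khat m) e) \<and>
                etgt (torus2 (2*m+1)) (f1 m e) = id (esrc (Khat m) e))"
  proof
    fix e assume "e \<in> edges (Khat m)"
    then obtain y j where e: "e = (y, j)" and j: "1 \<le> j" "j \<le> 2*m+1" by (auto simp: Khat_def)
    have p: "pi_act m j y = flip (cc m j y) y" using cc_spec[OF j] by blast
    show "(True \<and> esrc (torus2 (2*m+1)) (f1 m e) = id (esrc (Khat m) e) \<and>
                etgt (torus2 (2*m+1)) (f1 m e) = id (etgt (Khat m) e)) \<or>
        (\<not> True \<and> esrc (torus2 (2*m+1)) (f1 m e) = id (etgt (Khat m) e) \<and>
                etgt (torus2 (2*m+1)) (f1 m e) = id (esrc (Khat m) e))"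
      by (auto simp: e Khat_def torus2_def torus_src_def torus_tgt_def f1_def p fun_eq_iff flip_app)
  qed
  have FS: "\<forall>F\<in>faces (Khat m). \<exists>k.
        fbdry (torus2 (2*m+1)) (f2 m F) = rotate k (map (\<lambda>(e, d). (f1 m e, d = (\<lambda>_. True) e)) (fbdry (Khat m) F)) \<or>
        fbdry (torus2 (2*m+1)) (f2 m F) = rotate k (rev_path (map (\<lambda>(e, d). (f1 m e, d = (\<lambda>_. True) e)) (fbdry (Khat m) F)))"
  proof
    fix F assume F: "F \<in> faces (Khat m)"
    have "map (\<lambda>(e, d). (f1 m e, d = (\<lambda>_. True) e)) (fbdry (Khat m) F) = img m F"
      by (simp add: img_def hh_def)
    thus "\<exists>k. fbdry (torus2 (2*m+1)) (f2 m F) = rotate k (map (\<lambda>(e, d). (f1 m e, d = (\<lambda>_. True) e)) (fbdry (Khat m) F)) \<or>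
        fbdry (torus2 (2*m+1)) (f2 m F) = rotate k (rev_path (map (\<lambda>(e, d). (f1 m e, d = (\<lambda>_. True) e)) (fbdry (Khat m) F)))"
      using f2_spec[OF m F] by (simp add: torus2_def)
  qed
  have "cellular_embedding (Khat m) (torus2 (2*m+1)) id (f1 m) (f2 m) (\<lambda>_. True)"
    unfolding cellular_embedding_def
    using V E1 F1 ES FS f1_inj f2_inj[OF m] by simp
  thus ?thesis unfolding cellularly_embeds_def by blast
qed


end
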